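(* Let $T\in(0,\infty]$ and let $u(x,t)=(u_1,u_2)$, $x=(x_1,x_2)\in\mathbb{R}^2$, $t\in[0,T)$, be a smooth divergence-free velocity field, $u=\nabla^{\perp}\psi=\left(-\frac{\partial\psi}{\partial x_2},\frac{\partial\psi}{\partial x_1}\right)$ for a smooth stream function $\psi$. Suppose $[a,b]$ ($a<b$) and $f_\pm\in C^1([a,b]\times[0,T))$ satisfy: (i) $f_-(x_1,t)<f_+(x_1,t)$ for all $x_1\in[a,b]$, $t\in[0,T)$; (ii) $u_2(x_1,x_2,t)=\frac{\partial f_\pm}{\partial x_1}(x_1,t)\,u_1(x_1,x_2,t)+\frac{\partial f_\pm}{\partial t}(x_1,t)$ at $x_2=f_\pm(x_1,t)$ for all $x_1\in[a,b]$, $t\in[0,T)$ (the arcs $x_2=f_\pm(x_1,t)$ move with the fluid); and (iii) the velocity growth is controlled: $$\int_0^T\sup\{|u(x_1,x_2,t)|: x_1\in[a,b],\ f_-(x_1,t)\le x_2\le f_+(x_1,t)\}\,dt<\infty.$$ Then it is not the case that both $f_+(x_1,t)-f_-(x_1,t)$ is bounded on $[a,b]\times[0,T)$ and $\lim_{t\to T^-}(f_+(x_1,t)-f_-(x_1,t))=0$ for every $x_1\in[a,b]$; that is, a sharp front cannot develop at time $T$.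
   Context: A sharp front at time $T$ means the existence of $[a,b]$, $f_\pm$ as in (i)–(ii) such that moreover $f_+-f_-$ is bounded on $[a,b]\times[0,T)$ and $\lim_{t\to T^-}(f_+(x_1,t)-f_-(x_1,t))=0$ for all $x_1\in[a,b]$. The spatial domain may be $\mathbb{R}^2$ or the torus $\mathbb{R}^2/\mathbb{Z}^2$. *)

theory Defs
  imports "HOL-Analysis.Analysis"
begin

fun Ck_on :: "nat \<Rightarrow> 'a::euclidean_space set \<Rightarrow> ('a \<Rightarrow> real) \<Rightarrow> bool" where
  "Ck_on 0 U g = continuous_on U g"
| "Ck_on (Suc k) U g =
     ((\<forall>x\<in>U. g differentiable (at x)) \<and>
      (\<forall>i\<in>Basis. Ck_on k U (\<lambda>x. frechet_derivative g (at x) i)))"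

definition smooth_on :: "'a::euclidean_space set \<Rightarrow> ('a \<Rightarrow> real) \<Rightarrow> bool" where
  "smooth_on S g \<longleftrightarrow> (\<exists>U. open U \<and> S \<subseteq> U \<and> (\<forall>k. Ck_on k U g))"

definition time_int :: "ereal \<Rightarrow> real set" where
  "time_int T = {t. 0 \<le> t \<and> ereal t < T}"

definition before :: "ereal \<Rightarrow> real filter" where
  "before T = (if T = \<infinity> then at_top else at_left (real_of_ereal T))"

definition vel1 :: "(real \<times> real \<times> real \<Rightarrow> real) \<Rightarrow> real \<Rightarrow> real \<Rightarrow> real \<Rightarrow> real" where
  "vel1 \<psi> x1 x2 t = - deriv (\<lambda>y. \<psi> (x1, y, t)) x2"

definition vel2 :: "(real \<times> real \<times> real \<Rightarrow> real) \<Rightarrow> real \<Rightarrow> real \<Rightarrow> real \<Rightarrow> real" where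
  "vel2 \<psi> x1 x2 t = deriv (\<lambda>y. \<psi> (y, x2, t)) x1"

end

theory Submission
  imports Defs
begin


lemma sup_param_cont:
  fixes h :: "'q::metric_space \<Rightarrow> real \<Rightarrow> real"
  assumes K: "compact K" "K \<noteq> {}" and c: "continuous_on (K \<times> S) (\<lambda>(q, s). h q s)"
    and nb: "\<And>s0. s0 \<in> S \<Longrightarrow> \<exists>C d. compact C \<and> C \<subseteq> S \<and> 0 < d \<and> (\<forall>s\<in>S. dist s s0 < d \<longrightarrow> s \<in> C)"
  shows "continuous_on S (\<lambda>s. Sup ((\<lambda>q. h q s) ` K))"
  unfolding continuous_on_iff
proof (intro ballI allI impI)
  fix s0 e assume s0: "s0 \<in> S" and e: "(0::real) < e"
  obtain C d0 where C: "compact C" "C \<subseteq> S" "0 < d0" "\<forall>s\<in>S. dist s s0 < d0 \<longrightarrow> s \<in> C"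
    using nb[OF s0] by blast
  have s0C: "s0 \<in> C" using C(4) s0 C(3) by simp
  have "uniformly_continuous_on (K \<times> C) (\<lambda>(q, s). h q s)"
    using C(1,2) K(1) by (intro compact_uniformly_continuous continuous_on_subset[OF c] compact_Times) auto
  moreover have "0 < e/2" using e by simp
  ultimately obtain d1 where d1: "0 < d1" "\<And>x x'. x \<in> K \<times> C \<Longrightarrow> x' \<in> K \<times> C \<Longrightarrow> dist x' x < d1 \<Longrightarrow>
      dist ((\<lambda>(q, s). h q s) x') ((\<lambda>(q, s). h q s) x) < e/2"
    unfolding uniformly_continuous_on_def by metis
  have hs: "continuous_on K (\<lambda>q. h q s)" if "s \<in> S" for s
  proof -
    have "continuous_on K (\<lambda>q. (\<lambda>(q, s). h q s) (q, s))"
      by (rule continuous_on_compose2[OF c]) (use that in \<open>auto intro!: continuous_intros\<close>)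
    then show ?thesis by simp
  qed
  have bdd: "bdd_above ((\<lambda>q. h q s) ` K)" if "s \<in> S" for s
    by (intro bounded_imp_bdd_above compact_imp_bounded compact_continuous_image hs that K(1))
  show "\<exists>d>0. \<forall>s\<in>S. dist s s0 < d \<longrightarrow> dist (Sup ((\<lambda>q. h q s) ` K)) (Sup ((\<lambda>q. h q s0) ` K)) < e"
  proof (intro exI[of _ "min d0 d1"] conjI ballI impI)
    show "0 < min d0 d1" using C d1 by simp
    fix s assume s: "s \<in> S" "dist s s0 < min d0 d1"
    have sC: "s \<in> C" using C(4) s by auto
    have diff: "\<bar>h q s - h q s0\<bar> \<le> e/2" if q: "q \<in> K" for q
    proof -
      have "dist (q, s) (q, s0) < d1" using s by (simp add: dist_Pair_Pair)
      then have "dist ((\<lambda>(q, s). h q s) (q, s)) ((\<lambda>(q, s). h q s) (q, s0)) < e/2"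
        using q sC s0C by (intro d1(2)) auto
      then show ?thesis by (simp add: dist_real_def)
    qed
    have A: "Sup ((\<lambda>q. h q s) ` K) \<le> Sup ((\<lambda>q. h q s0) ` K) + e/2"
    proof (rule cSUP_least[OF K(2)])
      fix q assume q: "q \<in> K"
      have "h q s0 \<le> Sup ((\<lambda>q. h q s0) ` K)" using cSUP_upper[OF q bdd[OF s0]] .
      then show "h q s \<le> Sup ((\<lambda>q. h q s0) ` K) + e/2" using diff[OF q] by linarith
    qed
    have B: "Sup ((\<lambda>q. h q s0) ` K) \<le> Sup ((\<lambda>q. h q s) ` K) + e/2"
    proof (rule cSUP_least[OF K(2)])
      fix q assume q: "q \<in> K"
      have "h q s \<le> Sup ((\<lambda>q. h q s) ` K)" using cSUP_upper[OF q bdd[OF s(1)]] .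
      then show "h q s0 \<le> Sup ((\<lambda>q. h q s) ` K) + e/2" using diff[OF q] by linarith
    qed
    show "dist (Sup ((\<lambda>q. h q s) ` K)) (Sup ((\<lambda>q. h q s0) ` K)) < e"
      using A B e by (simp add: dist_real_def abs_le_iff)
  qed
qed

locale front =
  fixes T :: ereal and \<psi> :: "real \<times> real \<times> real \<Rightarrow> real" and a b :: real
    and fp fm fpx fpt fmx fmt :: "real \<Rightarrow> real \<Rightarrow> real" and M :: real
  assumes T_pos: "0 < T"
    and smooth: "smooth_on {(x1, x2, t). t \<in> time_int T} \<psi>"
    and ab: "a < b"
    and fp_dx: "\<And>x t. x \<in> {a..b} \<Longrightarrow> t \<in> time_int T \<Longrightarrow>
                  ((\<lambda>y. fp y t) has_real_derivative fpx x t) (at x within {a..b})"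
    and fp_dt: "\<And>x t. x \<in> {a..b} \<Longrightarrow> t \<in> time_int T \<Longrightarrow>
                  ((\<lambda>s. fp x s) has_real_derivative fpt x t) (at t within time_int T)"
    and fm_dx: "\<And>x t. x \<in> {a..b} \<Longrightarrow> t \<in> time_int T \<Longrightarrow>
                  ((\<lambda>y. fm y t) has_real_derivative fmx x t) (at x within {a..b})"
    and fm_dt: "\<And>x t. x \<in> {a..b} \<Longrightarrow> t \<in> time_int T \<Longrightarrow>
                  ((\<lambda>s. fm x s) has_real_derivative fmt x t) (at t within time_int T)"
    and cont: "continuous_on ({a..b} \<times> time_int T) (\<lambda>(x, t). fp x t)"
              "continuous_on ({a..b} \<times> time_int T) (\<lambda>(x, t). fpx x t)"
              "continuous_on ({a..b} \<times> time_int T) (\<lambda>(x, t). fpt x t)"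
              "continuous_on ({a..b} \<times> time_int T) (\<lambda>(x, t). fm x t)"
              "continuous_on ({a..b} \<times> time_int T) (\<lambda>(x, t). fmx x t)"
              "continuous_on ({a..b} \<times> time_int T) (\<lambda>(x, t). fmt x t)"
    and order: "\<And>x t. x \<in> {a..b} \<Longrightarrow> t \<in> time_int T \<Longrightarrow> fm x t < fp x t"
    and kin_p: "\<And>x t. x \<in> {a..b} \<Longrightarrow> t \<in> time_int T \<Longrightarrow>
                  vel2 \<psi> x (fp x t) t = fpx x t * vel1 \<psi> x (fp x t) t + fpt x t"
    and kin_m: "\<And>x t. x \<in> {a..b} \<Longrightarrow> t \<in> time_int T \<Longrightarrow>
                  vel2 \<psi> x (fm x t) t = fmx x t * vel1 \<psi> x (fm x t) t + fmt x t"
    and growth: "(\<integral>\<^sup>+ t \<in> time_int T.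
                    (SUP p \<in> {(x1, x2). x1 \<in> {a..b} \<and> fm x1 t \<le> x2 \<and> x2 \<le> fp x1 t}.
                       ennreal (sqrt ((vel1 \<psi> (fst p) (snd p) t)\<^sup>2 + (vel2 \<psi> (fst p) (snd p) t)\<^sup>2)))
                  \<partial>lborel) < \<infinity>"
    and bnd: "\<And>x t. x \<in> {a..b} \<Longrightarrow> t \<in> time_int T \<Longrightarrow> \<bar>fp x t - fm x t\<bar> \<le> M"
    and lim: "\<And>x. x \<in> {a..b} \<Longrightarrow> ((\<lambda>t. fp x t - fm x t) \<longlongrightarrow> 0) (before T)"
begin

abbreviation "S \<equiv> time_int T"

lemma S_nonneg: "t \<in> S \<Longrightarrow> 0 \<le> t"
  by (simp add: time_int_def)

lemma S_down: "0 \<le> u \<Longrightarrow> u \<le> t \<Longrightarrow> t \<in> S \<Longrightarrow> u \<in> S"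
  unfolding time_int_def by (auto intro: le_less_trans[of "ereal u" "ereal t"])

lemma S_0: "0 \<in> S"
  using T_pos by (simp add: time_int_def zero_ereal_def)

lemma S_Icc: "0 \<le> u \<Longrightarrow> t \<in> S \<Longrightarrow> {u..t} \<subseteq> S"
  using S_down by auto

lemma S_up: "t \<in> S \<Longrightarrow> \<exists>t'\<in>S. t < t'"
proof -
  assume t: "t \<in> S"
  show ?thesis
  proof (cases T)
    case (real r)
    with t have "t < r" "0 \<le> t" by (auto simp: time_int_def)
    then show ?thesis using real by (intro bexI[of _ "(t+r)/2"]) (auto simp: time_int_def)
  next
    case PInf
    with t show ?thesis by (intro bexI[of _ "t+1"]) (auto simp: time_int_def)
  next
    case MInf
    with T_pos show ?thesis by simp
  qed
qed

definition UU where "UU = (SOME U. open U \<and> {(x1, x2, t). t \<in> S} \<subseteq> U \<and> (\<forall>k. Ck_on k U \<psi>))"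

lemma UU: "open UU" "{(x1, x2, t). t \<in> S} \<subseteq> UU" "\<And>k. Ck_on k UU \<psi>"
proof -
  have "\<exists>U. open U \<and> {(x1, x2, t). t \<in> S} \<subseteq> U \<and> (\<forall>k. Ck_on k U \<psi>)"
    using smooth by (simp add: smooth_on_def)
  from someI_ex[OF this] show "open UU" "{(x1, x2, t). t \<in> S} \<subseteq> UU" "\<And>k. Ck_on k UU \<psi>"
    unfolding UU_def by auto
qed

lemma inUU: "s \<in> S \<Longrightarrow> (x, y, s) \<in> UU"
  using UU(2) by auto

definition D where "D p = frechet_derivative \<psi> (at p)"

lemma psi_deriv: "p \<in> UU \<Longrightarrow> (\<psi> has_derivative D p) (at p)"
  using UU(3)[of 1] unfolding D_def by (auto simp: frechet_derivative_works)

lemma D_lin: "p \<in> UU \<Longrightarrow> bounded_linear (D p)"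
  using psi_deriv has_derivative_bounded_linear by blast

lemma D_cont: "e \<in> Basis \<Longrightarrow> continuous_on UU (\<lambda>p. D p e)"
  using UU(3)[of 1] unfolding D_def by auto

lemma B1: "(1::real, 0::real, 0::real) \<in> Basis" by (simp add: Basis_prod_def zero_prod_def)
lemma B2: "(0::real, 1::real, 0::real) \<in> Basis" by (simp add: Basis_prod_def zero_prod_def)

lemma psi_cont: "continuous_on UU \<psi>"
  using psi_deriv has_derivative_continuous continuous_at_imp_continuous_on by blast

lemma dy: "s \<in> S \<Longrightarrow> ((\<lambda>y. \<psi> (x, y, s)) has_real_derivative D (x, y, s) (0, 1, 0)) (at y)"
proof -
  assume s: "s \<in> S"
  have i: "((\<lambda>y. (x, y, s)) has_derivative (\<lambda>h. (0, h, 0))) (at y)"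
    by (auto intro!: derivative_eq_intros simp: zero_prod_def)
  have "((\<lambda>y. \<psi> (x, y, s)) has_derivative (\<lambda>h. D (x, y, s) (0, h, 0))) (at y)"
    using has_derivative_compose[OF i psi_deriv[OF inUU[OF s]]] by simp
  moreover have "h * D (x, y, s) (0, 1, 0) = D (x, y, s) (0, h, 0)" for h
  proof -
    have L: "linear (D (x, y, s))" using bounded_linear.linear[OF D_lin[OF inUU[OF s]]] .
    have "D (x, y, s) (0, h, 0) = D (x, y, s) (h *\<^sub>R (0, 1, 0))" by simp
    also have "\<dots> = h *\<^sub>R D (x, y, s) (0, 1, 0)" by (rule linear_scale[OF L])
    finally show ?thesis by simp
  qed
  ultimately show ?thesis by (rule has_derivative_imp_has_field_derivative)
qed

lemma dx: "s \<in> S \<Longrightarrow> ((\<lambda>x. \<psi> (x, y, s)) has_real_derivative D (x, y, s) (1, 0, 0)) (at x)"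
proof -
  assume s: "s \<in> S"
  have i: "((\<lambda>x. (x, y, s)) has_derivative (\<lambda>h. (h, 0, 0))) (at x)"
    by (auto intro!: derivative_eq_intros simp: zero_prod_def)
  have "((\<lambda>x. \<psi> (x, y, s)) has_derivative (\<lambda>h. D (x, y, s) (h, 0, 0))) (at x)"
    using has_derivative_compose[OF i psi_deriv[OF inUU[OF s]]] by simp
  moreover have "h * D (x, y, s) (1, 0, 0) = D (x, y, s) (h, 0, 0)" for h
  proof -
    have L: "linear (D (x, y, s))" using bounded_linear.linear[OF D_lin[OF inUU[OF s]]] .
    have "D (x, y, s) (h, 0, 0) = D (x, y, s) (h *\<^sub>R (1, 0, 0))" by simp
    also have "\<dots> = h *\<^sub>R D (x, y, s) (1, 0, 0)" by (rule linear_scale[OF L])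
    finally show ?thesis by simp
  qed
  ultimately show ?thesis by (rule has_derivative_imp_has_field_derivative)
qed

lemma vel1_eq: "s \<in> S \<Longrightarrow> vel1 \<psi> x y s = - D (x, y, s) (0, 1, 0)"
  unfolding vel1_def using dy DERIV_imp_deriv by metis

lemma vel2_eq: "s \<in> S \<Longrightarrow> vel2 \<psi> x y s = D (x, y, s) (1, 0, 0)"
  unfolding vel2_def using dx DERIV_imp_deriv by metis

lemma dcomp:
  assumes s: "s \<in> S" and f: "(f has_real_derivative f') (at x within X)"
  shows "((\<lambda>x. \<psi> (x, f x, s)) has_real_derivative
           (vel2 \<psi> x (f x) s - f' * vel1 \<psi> x (f x) s)) (at x within X)"
proof -
  have i: "((\<lambda>x. (x, f x, s)) has_derivative (\<lambda>h. (h, f' * h, 0))) (at x within X)"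
    using f by (auto intro!: derivative_eq_intros simp: has_field_derivative_def zero_prod_def)
  have "((\<lambda>x. \<psi> (x, f x, s)) has_derivative (\<lambda>h. D (x, f x, s) (h, f' * h, 0))) (at x within X)"
    using has_derivative_compose[OF i psi_deriv[OF inUU[OF s]]] by simp
  moreover have "h * (vel2 \<psi> x (f x) s - f' * vel1 \<psi> x (f x) s) = D (x, f x, s) (h, f' * h, 0)" for h
  proof -
    have L: "linear (D (x, f x, s))" using bounded_linear.linear[OF D_lin[OF inUU[OF s]]] .
    have "D (x, f x, s) (h, f' * h, 0) = D (x, f x, s) (h *\<^sub>R (1, 0, 0) + (f' * h) *\<^sub>R (0, 1, 0))" by simp
    also have "\<dots> = h *\<^sub>R D (x, f x, s) (1, 0, 0) + (f' * h) *\<^sub>R D (x, f x, s) (0, 1, 0)"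
      by (simp only: linear_add[OF L] linear_scale[OF L])
    finally show ?thesis by (simp add: vel1_eq[OF s] vel2_eq[OF s] algebra_simps)
  qed
  ultimately show ?thesis by (rule has_derivative_imp_has_field_derivative)
qed


definition "\<delta> x t = fp x t - fm x t"
definition "\<delta>t x t = fpt x t - fmt x t"
definition "\<Phi> x s = \<psi> (x, fp x s, s) - \<psi> (x, fm x s, s)"

lemma cont_fix_t: "continuous_on ({a..b} \<times> S) (\<lambda>(x, t). f x t) \<Longrightarrow> t \<in> S \<Longrightarrow> continuous_on X (\<lambda>x. f x t)"
  if "X \<subseteq> {a..b}" for f :: "real \<Rightarrow> real \<Rightarrow> real"
proof -
  assume c: "continuous_on ({a..b} \<times> S) (\<lambda>(x, t). f x t)" and t: "t \<in> S"
  have "continuous_on X (\<lambda>x. (\<lambda>(x, t). f x t) (x, t))"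
    by (rule continuous_on_compose2[OF c]) (use that t in \<open>auto intro!: continuous_intros\<close>)
  then show ?thesis by simp
qed

lemma cont_fix_x: "continuous_on ({a..b} \<times> S) (\<lambda>(x, t). f x t) \<Longrightarrow> x \<in> {a..b} \<Longrightarrow> continuous_on Y (\<lambda>t. f x t)"
  if "Y \<subseteq> S" for f :: "real \<Rightarrow> real \<Rightarrow> real"
proof -
  assume c: "continuous_on ({a..b} \<times> S) (\<lambda>(x, t). f x t)" and x: "x \<in> {a..b}"
  have "continuous_on Y (\<lambda>t. (\<lambda>(x, t). f x t) (x, t))"
    by (rule continuous_on_compose2[OF c]) (use that x in \<open>auto intro!: continuous_intros\<close>)
  then show ?thesis by simp
qed

lemma delta_cont: "continuous_on ({a..b} \<times> S) (\<lambda>(x, t). \<delta> x t)"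
  using continuous_on_diff[OF cont(1) cont(4)] by (simp add: \<delta>_def split_beta)

lemma deltat_cont: "continuous_on ({a..b} \<times> S) (\<lambda>(x, t). \<delta>t x t)"
  using continuous_on_diff[OF cont(3) cont(6)] by (simp add: \<delta>t_def split_beta)

lemma delta_pos: "x \<in> {a..b} \<Longrightarrow> t \<in> S \<Longrightarrow> 0 < \<delta> x t"
  using order by (simp add: \<delta>_def)

lemma Phi_deriv: "x \<in> {a..b} \<Longrightarrow> s \<in> S \<Longrightarrow> ((\<lambda>x. \<Phi> x s) has_real_derivative \<delta>t x s) (at x within {a..b})"
proof -
  assume x: "x \<in> {a..b}" and s: "s \<in> S"
  have 1: "((\<lambda>x. \<psi> (x, fp x s, s)) has_real_derivative fpt x s) (at x within {a..b})"
    using dcomp[OF s fp_dx[OF x s]] kin_p[OF x s] by simp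
  have 2: "((\<lambda>x. \<psi> (x, fm x s, s)) has_real_derivative fmt x s) (at x within {a..b})"
    using dcomp[OF s fm_dx[OF x s]] kin_m[OF x s] by simp
  show ?thesis using DERIV_diff[OF 1 2] by (simp add: \<Phi>_def \<delta>t_def)
qed

lemma FTC_x: "a \<le> \<alpha> \<Longrightarrow> \<alpha> \<le> \<beta> \<Longrightarrow> \<beta> \<le> b \<Longrightarrow> s \<in> S \<Longrightarrow>
   ((\<lambda>x. \<delta>t x s) has_integral (\<Phi> \<beta> s - \<Phi> \<alpha> s)) {\<alpha>..\<beta>}"
  apply (rule fundamental_theorem_of_calculus)
   apply simp
  apply (simp only: has_real_derivative_iff_has_vector_derivative[symmetric])
  apply (rule DERIV_subset[OF Phi_deriv])
    apply auto
  done

lemma delta_dt: "x \<in> {a..b} \<Longrightarrow> s \<in> S \<Longrightarrow> ((\<lambda>t. \<delta> x t) has_real_derivative \<delta>t x s) (at s within S)"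
  unfolding \<delta>_def \<delta>t_def by (intro DERIV_diff fp_dt fm_dt)

lemma FTC_t: "x \<in> {a..b} \<Longrightarrow> t \<le> t1 \<Longrightarrow> t \<in> S \<Longrightarrow> t1 \<in> S \<Longrightarrow>
   ((\<lambda>s. \<delta>t x s) has_integral (\<delta> x t1 - \<delta> x t)) {t..t1}"
  apply (rule fundamental_theorem_of_calculus)
   apply simp
  apply (simp only: has_real_derivative_iff_has_vector_derivative[symmetric])
  apply (rule DERIV_subset[OF delta_dt])
    apply (use S_Icc[of t t1] S_nonneg[of t] in force)+
  done

lemma ident:
  assumes "a \<le> \<alpha>" "\<alpha> \<le> \<beta>" "\<beta> \<le> b" "t \<le> t1" "t \<in> S" "t1 \<in> S"
  shows "integral {\<alpha>..\<beta>} (\<lambda>x. \<delta> x t1) - integral {\<alpha>..\<beta>} (\<lambda>x. \<delta> x t)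
         = integral {t..t1} (\<lambda>s. \<Phi> \<beta> s - \<Phi> \<alpha> s)"
proof -
  have sub: "{\<alpha>..\<beta>} \<times> {t..t1} \<subseteq> {a..b} \<times> S"
    using assms S_Icc[of t t1] S_nonneg[of t] by auto
  have c: "continuous_on (cbox (\<alpha>, t) (\<beta>, t1)) (\<lambda>(x, s). \<delta>t x s)"
    using continuous_on_subset[OF deltat_cont sub] by (simp add: cbox_Pair_eq)
  note sw = integral_swap_continuous[OF c]
  have "integral {\<alpha>..\<beta>} (\<lambda>x. \<delta> x t1) - integral {\<alpha>..\<beta>} (\<lambda>x. \<delta> x t)
      = integral {\<alpha>..\<beta>} (\<lambda>x. \<delta> x t1 - \<delta> x t)"
    apply (rule integral_diff[symmetric])
     apply (rule integrable_continuous_interval, rule cont_fix_t[OF _ delta_cont], use assms in auto)+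
    done
  also have "\<dots> = integral {\<alpha>..\<beta>} (\<lambda>x. integral {t..t1} (\<lambda>s. \<delta>t x s))"
    apply (rule integral_cong)
    using FTC_t[OF _ assms(4,5,6)] assms by (auto intro!: integral_unique[symmetric])
  also have "\<dots> = integral {t..t1} (\<lambda>s. integral {\<alpha>..\<beta>} (\<lambda>x. \<delta>t x s))"
    using sw by simp
  also have "\<dots> = integral {t..t1} (\<lambda>s. \<Phi> \<beta> s - \<Phi> \<alpha> s)"
    apply (rule integral_cong)
    using FTC_x[OF assms(1,2,3)] assms S_Icc[of t t1] S_nonneg[of t] by (auto intro!: integral_unique)
  finally show ?thesis .
qed


definition "vn x y s = sqrt ((vel1 \<psi> x y s)\<^sup>2 + (vel2 \<psi> x y s)\<^sup>2)"
definition "vnp p = sqrt ((- D p (0, 1, 0))\<^sup>2 + (D p (1, 0, 0))\<^sup>2)"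
definition "KK = {a..b} \<times> {0..1::real}"
definition "g q s = vn (fst q) (fm (fst q) s + snd q * \<delta> (fst q) s) s"
definition "Ubar s = Sup ((\<lambda>q. g q s) ` KK)"

lemma vn_vnp: "s \<in> S \<Longrightarrow> vn x y s = vnp (x, y, s)"
  by (simp add: vn_def vnp_def vel1_eq vel2_eq)

lemma vnp_cont: "continuous_on UU vnp"
  unfolding vnp_def
  by (intro continuous_intros D_cont B1 B2)

lemma KK: "compact KK" "KK \<noteq> {}"
  using ab by (auto simp: KK_def intro!: compact_Times)

lemma comp1: "continuous_on (KK \<times> S) (\<lambda>z. f (fst (fst z)) (snd z))"
  if c: "continuous_on ({a..b} \<times> S) (\<lambda>(x, t). f x t)" for f :: "real \<Rightarrow> real \<Rightarrow> real"
proof -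
  have "continuous_on (KK \<times> S) (\<lambda>z. (\<lambda>(x, t). f x t) (fst (fst z), snd z))"
    by (rule continuous_on_compose2[OF c]) (auto intro!: continuous_intros simp: KK_def)
  then show ?thesis by simp
qed

lemma g_cont: "continuous_on (KK \<times> S) (\<lambda>(q, s). g q s)"
proof -
  have e: "g q s = vnp (fst q, fm (fst q) s + snd q * (fp (fst q) s - fm (fst q) s), s)"
    if "(q, s) \<in> KK \<times> S" for q s
    using that by (simp add: g_def vn_vnp \<delta>_def)
  have "continuous_on (KK \<times> S) (\<lambda>z. vnp (fst (fst z), fm (fst (fst z)) (snd z) + snd (fst z) * (fp (fst (fst z)) (snd z) - fm (fst (fst z)) (snd z)), snd z))"
    apply (rule continuous_on_compose2[OF vnp_cont])
     apply (intro continuous_intros comp1 cont)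
    using inUU by auto
  then show ?thesis
    by (rule continuous_on_eq) (auto simp: e)
qed

lemma g_cont_s: "s \<in> S \<Longrightarrow> continuous_on KK (\<lambda>q. g q s)"
proof -
  assume s: "s \<in> S"
  have "continuous_on KK (\<lambda>q. (\<lambda>(q, s). g q s) (q, s))"
    by (rule continuous_on_compose2[OF g_cont]) (use s in \<open>auto intro!: continuous_intros\<close>)
  then show ?thesis by simp
qed

lemma g_bdd: "s \<in> S \<Longrightarrow> bdd_above ((\<lambda>q. g q s) ` KK)"
  by (intro bounded_imp_bdd_above compact_imp_bounded compact_continuous_image g_cont_s KK(1))

lemma Ubar_attained: "s \<in> S \<Longrightarrow> \<exists>q\<in>KK. Ubar s = g q s"
proof -
  assume s: "s \<in> S"
  obtain q where "q \<in> KK" "\<forall>y\<in>KK. g y s \<le> g q s"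
    using continuous_attains_sup[OF KK g_cont_s[OF s]] by blast
  then have "Ubar s = g q s" unfolding Ubar_def
    by (intro antisym cSUP_least cSUP_upper g_bdd s KK) auto
  then show ?thesis using \<open>q \<in> KK\<close> by blast
qed

lemma Ubar_ge: "s \<in> S \<Longrightarrow> q \<in> KK \<Longrightarrow> g q s \<le> Ubar s"
  unfolding Ubar_def by (intro cSUP_upper g_bdd)

lemma Ubar_nonneg: "s \<in> S \<Longrightarrow> 0 \<le> Ubar s"
  using Ubar_attained[of s] by (auto simp: g_def vn_def)

lemma vel1_bound:
  assumes x: "x \<in> {a..b}" and s: "s \<in> S" and y: "fm x s \<le> y" "y \<le> fp x s"
  shows "\<bar>vel1 \<psi> x y s\<bar> \<le> Ubar s"
proof -
  define \<theta> where "\<theta> = (y - fm x s) / \<delta> x s"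
  have dp: "0 < \<delta> x s" using delta_pos x s by auto
  have q: "(x, \<theta>) \<in> KK" using x y dp by (auto simp: KK_def \<theta>_def \<delta>_def field_simps)
  have "fm x s + \<theta> * \<delta> x s = y" using dp by (simp add: \<theta>_def)
  then have "g (x, \<theta>) s = vn x y s" by (simp add: g_def)
  moreover have "\<bar>vel1 \<psi> x y s\<bar> \<le> vn x y s"
    unfolding vn_def by (metis real_sqrt_abs real_sqrt_le_mono le_add_same_cancel1 zero_le_power2)
  ultimately show ?thesis using Ubar_ge[OF s q] by simp
qed

lemma Phi_bound: "x \<in> {a..b} \<Longrightarrow> s \<in> S \<Longrightarrow> \<bar>\<Phi> x s\<bar> \<le> Ubar s * \<delta> x s"
proof -
  assume x: "x \<in> {a..b}" and s: "s \<in> S"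
  have lt: "fm x s < fp x s" using order x s by auto
  obtain z where z: "fm x s < z" "z < fp x s"
    "\<psi> (x, fp x s, s) - \<psi> (x, fm x s, s) = (fp x s - fm x s) * D (x, z, s) (0, 1, 0)"
    using MVT2[OF lt, of "\<lambda>y. \<psi> (x, y, s)" "\<lambda>y. D (x, y, s) (0, 1, 0)"] dy[OF s] by blast
  have "\<bar>D (x, z, s) (0, 1, 0)\<bar> \<le> Ubar s"
    using vel1_bound[OF x s, of z] z vel1_eq[OF s, of x z] by simp
  then show ?thesis using z lt unfolding \<Phi>_def \<delta>_def
    by (simp add: abs_mult mult.commute mult_left_mono)
qed

lemma Ubar_growth: "s \<in> S \<Longrightarrow> ennreal (Ubar s) \<le>
   (SUP p \<in> {(x1, x2). x1 \<in> {a..b} \<and> fm x1 s \<le> x2 \<and> x2 \<le> fp x1 s}.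
                       ennreal (sqrt ((vel1 \<psi> (fst p) (snd p) s)\<^sup>2 + (vel2 \<psi> (fst p) (snd p) s)\<^sup>2)))"
proof -
  assume s: "s \<in> S"
  obtain q where q: "q \<in> KK" "Ubar s = g q s" using Ubar_attained[OF s] by blast
  obtain x \<theta> where xq: "q = (x, \<theta>)" by (cases q)
  have x: "x \<in> {a..b}" and th: "0 \<le> \<theta>" "\<theta> \<le> 1" using q xq by (auto simp: KK_def)
  have dp: "0 < \<delta> x s" using delta_pos x s by auto
  have "\<theta> * \<delta> x s \<le> \<delta> x s" using th dp by (simp add: mult_le_cancel_right1)
  then have le: "fm x s + \<theta> * \<delta> x s \<le> fp x s" unfolding \<delta>_def by linarith
  have "0 \<le> \<theta> * \<delta> x s" using th dp by simp
  then have mem: "(x, fm x s + \<theta> * \<delta> x s) \<in> {(x1, x2). x1 \<in> {a..b} \<and> fm x1 s \<le> x2 \<and> x2 \<le> fp x1 s}"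
    using x le by auto
  show ?thesis
    using SUP_upper[OF mem, of "\<lambda>p. ennreal (sqrt ((vel1 \<psi> (fst p) (snd p) s)\<^sup>2 + (vel2 \<psi> (fst p) (snd p) s)\<^sup>2))"]
    by (simp add: q xq g_def vn_def)
qed


lemma S_nb: "s0 \<in> S \<Longrightarrow> \<exists>C d. compact C \<and> C \<subseteq> S \<and> 0 < d \<and> (\<forall>s\<in>S. dist s s0 < d \<longrightarrow> s \<in> C)"
proof -
  assume s0: "s0 \<in> S"
  obtain s1 where s1: "s1 \<in> S" "s0 < s1" using S_up[OF s0] by blast
  show ?thesis
  proof (intro exI conjI)
    show "compact {0..s1}" by simp
    show "{0..s1} \<subseteq> S" using S_Icc[of 0 s1] s1 by simp
    show "0 < s1 - s0" using s1 by simp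
    show "\<forall>s\<in>S. dist s s0 < s1 - s0 \<longrightarrow> s \<in> {0..s1}"
      using S_nonneg by (auto simp: dist_real_def)
  qed
qed

lemma Ubar_cont: "continuous_on S Ubar"
  unfolding Ubar_def[abs_def] by (rule sup_param_cont[OF KK g_cont S_nb])

lemma Ubar_int: "t \<in> S \<Longrightarrow> 0 \<le> u \<Longrightarrow> Ubar integrable_on {u..t}"
  by (intro integrable_continuous_interval continuous_on_subset[OF Ubar_cont] S_Icc)

lemma tail: "0 < \<eta> \<Longrightarrow> \<exists>t0\<in>S. \<forall>t1\<in>S. t0 \<le> t1 \<longrightarrow> integral {t0..t1} Ubar \<le> \<eta>"
proof -
  assume eta: "0 < \<eta>"
  define G where "G = (\<integral>\<^sup>+ t \<in> time_int T.
                    (SUP p \<in> {(x1, x2). x1 \<in> {a..b} \<and> fm x1 t \<le> x2 \<and> x2 \<le> fp x1 t}.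
                       ennreal (sqrt ((vel1 \<psi> (fst p) (snd p) t)\<^sup>2 + (vel2 \<psi> (fst p) (snd p) t)\<^sup>2)))
                  \<partial>lborel)"
  have Gfin: "G < \<infinity>" using growth by (simp add: G_def)
  then obtain gr where gr: "G = ennreal gr" "0 \<le> gr"
    by (cases G rule: ennreal_cases) auto
  define F where "F t = integral {0..t} Ubar" for t
  have Fle: "F t \<le> gr" if t: "t \<in> S" for t
  proof -
    have hi: "(Ubar has_integral F t) {0..t}"
      unfolding F_def using Ubar_int[OF t] by (simp add: integrable_integral)
    have nn: "\<And>x. x \<in> {0..t} \<Longrightarrow> 0 \<le> Ubar x" using Ubar_nonneg S_Icc[of 0 t] t by auto
    have "ennreal (F t) = (\<integral>\<^sup>+ x. ennreal (Ubar x) * indicator {0..t} x \<partial>lborel)"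
      by (rule nn_integral_has_integral_lebesgue'[OF nn hi, symmetric])
    also have "\<dots> \<le> G"
      unfolding G_def
    proof (rule nn_integral_mono)
      fix x
      show "ennreal (Ubar x) * indicator {0..t} x \<le> (SUP p \<in> {(x1, x2). x1 \<in> {a..b} \<and> fm x1 x \<le> x2 \<and> x2 \<le> fp x1 x}.
                       ennreal (sqrt ((vel1 \<psi> (fst p) (snd p) x)\<^sup>2 + (vel2 \<psi> (fst p) (snd p) x)\<^sup>2))) * indicator S x"
      proof (cases "x \<in> {0..t}")
        case True
        then have "x \<in> S" using S_down[of x t] t by auto
        then show ?thesis using True Ubar_growth[of x] by simp
      qed simp
    qed
    finally show ?thesis using gr by simp
  qed
  have Fmono: "F t + integral {t..t'} Ubar = F t'" if "t \<in> S" "t' \<in> S" "t \<le> t'" for t t'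
    unfolding F_def using that S_nonneg[of t]
    by (intro Henstock_Kurzweil_Integration.integral_combine Ubar_int) auto
  define L where "L = Sup (F ` S)"
  have bddF: "bdd_above (F ` S)" using Fle by (intro bdd_aboveI[of _ gr]) auto
  have "L - \<eta> < L" using eta by simp
  then obtain y where "y \<in> F ` S" "L - \<eta> < y"
    unfolding L_def using S_0 by (metis less_cSupE empty_iff image_is_empty)
  then obtain t0 where t0: "t0 \<in> S" "L - \<eta> < F t0" by blast
  show ?thesis
  proof (intro bexI[OF _ t0(1)] ballI impI)
    fix t1 assume t1: "t1 \<in> S" "t0 \<le> t1"
    have "F t1 \<le> L" unfolding L_def by (rule cSup_upper) (use t1 bddF in auto)
    then show "integral {t0..t1} Ubar \<le> \<eta>" using Fmono[OF t0(1) t1(1) t1(2)] t0 by linarith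
  qed
qed

end



lemma int_mult_left: "integral S (\<lambda>x. c * f x) = c * integral S f" for f :: "real \<Rightarrow> real"
  using integral_cmul[of S c f] by simp

lemma volterra:
  fixes U :: "real \<Rightarrow> real"
  assumes c: "continuous_on {t..t1} U" and tt: "t \<le> t1"
  shows "integral {t..t1} (\<lambda>s. U s * (integral {s..t1} U)^m) = (integral {t..t1} U)^(Suc m) / real (Suc m)"
proof -
  define J where "J s = integral {t..s} U" for s
  define C where "C = integral {t..t1} U"
  have JD: "(J has_real_derivative U s) (at s within {t..t1})" if "s \<in> {t..t1}" for s
    unfolding J_def using integral_has_vector_derivative[OF c that]
    by (simp add: has_real_derivative_iff_has_vector_derivative)
  have W: "integral {s..t1} U = C - J s" if "s \<in> {t..t1}" for s
    using Henstock_Kurzweil_Integration.integral_combine[of t s t1 U] that integrable_continuous_interval[OF c]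
    unfolding C_def J_def by auto
  have FD: "((\<lambda>s. - ((C - J s)^Suc m) / real (Suc m)) has_real_derivative U s * (C - J s)^m) (at s within {t..t1})"
    if "s \<in> {t..t1}" for s
    using JD[OF that] by (auto intro!: derivative_eq_intros) (cases m; simp add: field_simps)
  have "((\<lambda>s. U s * (C - J s)^m) has_integral ((\<lambda>s. - ((C - J s)^Suc m) / real (Suc m)) t1 - (\<lambda>s. - ((C - J s)^Suc m) / real (Suc m)) t)) {t..t1}"
    apply (rule fundamental_theorem_of_calculus[OF tt])
    using FD by (simp add: has_real_derivative_iff_has_vector_derivative)
  moreover have "J t = 0" "J t1 = C" by (auto simp: J_def C_def)
  ultimately have "((\<lambda>s. U s * (C - J s)^m) has_integral C^Suc m / real (Suc m)) {t..t1}" by simp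
  then have "((\<lambda>s. U s * (integral {s..t1} U)^m) has_integral C^Suc m / real (Suc m)) {t..t1}"
    by (rule has_integral_eq[rotated]) (simp add: W)
  then show ?thesis unfolding C_def by (rule integral_unique)
qed

lemma exp_term: "0 \<le> x \<Longrightarrow> x ^ k / fact k \<le> exp (x::real)"
proof -
  assume x: "0 \<le> x"
  have s: "(\<lambda>n. x^n /\<^sub>R fact n) sums exp x" by (rule exp_converges)
  have "sum (\<lambda>n. x^n /\<^sub>R fact n) {k} \<le> suminf (\<lambda>n. x^n /\<^sub>R fact n)"
    by (rule sum_le_suminf) (use s x in \<open>auto simp: sums_iff\<close>)
  then show ?thesis using sums_unique[OF s] by (simp add: divide_inverse_commute)
qed

context front
begin

lemma delta_int: "a \<le> p \<Longrightarrow> q \<le> b \<Longrightarrow> s \<in> S \<Longrightarrow> (\<lambda>x. \<delta> x s) integrable_on {p..q}"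
  by (intro integrable_continuous_interval cont_fix_t[OF _ delta_cont]) auto

lemma delta_nonneg: "x \<in> {a..b} \<Longrightarrow> s \<in> S \<Longrightarrow> 0 \<le> \<delta> x s"
  using delta_pos[of x s] by simp

lemma I_mono: "a \<le> p \<Longrightarrow> p \<le> p' \<Longrightarrow> q' \<le> q \<Longrightarrow> q \<le> b \<Longrightarrow> s \<in> S \<Longrightarrow>
   integral {p'..q'} (\<lambda>x. \<delta> x s) \<le> integral {p..q} (\<lambda>x. \<delta> x s)"
  by (rule integral_subset_le) (auto intro: delta_int delta_nonneg)

lemma I_split: "a \<le> p \<Longrightarrow> p \<le> p' \<Longrightarrow> p' \<le> q' \<Longrightarrow> q' \<le> q \<Longrightarrow> q \<le> b \<Longrightarrow> s \<in> S \<Longrightarrow>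
   integral {p..p'} (\<lambda>x. \<delta> x s) + integral {q'..q} (\<lambda>x. \<delta> x s) \<le> integral {p..q} (\<lambda>x. \<delta> x s)"
proof -
  assume h: "a \<le> p" "p \<le> p'" "p' \<le> q'" "q' \<le> q" "q \<le> b" "s \<in> S"
  have 1: "integral {p..p'} (\<lambda>x. \<delta> x s) + integral {p'..q} (\<lambda>x. \<delta> x s) = integral {p..q} (\<lambda>x. \<delta> x s)"
    using h by (intro Henstock_Kurzweil_Integration.integral_combine delta_int) auto
  have 2: "integral {p'..q'} (\<lambda>x. \<delta> x s) + integral {q'..q} (\<lambda>x. \<delta> x s) = integral {p'..q} (\<lambda>x. \<delta> x s)"
    using h by (intro Henstock_Kurzweil_Integration.integral_combine delta_int) auto
  have 3: "0 \<le> integral {p'..q'} (\<lambda>x. \<delta> x s)"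
    using h by (intro integral_nonneg delta_int delta_nonneg) auto
  show ?thesis using 1 2 3 by linarith
qed

lemma I_cont: "a \<le> p \<Longrightarrow> q \<le> b \<Longrightarrow> continuous_on S (\<lambda>s. integral {p..q} (\<lambda>x. \<delta> x s))"
proof -
  assume h: "a \<le> p" "q \<le> b"
  have "continuous_on (S \<times> cbox p q) (\<lambda>z. (\<lambda>(x, t). \<delta> x t) (snd z, fst z))"
    by (rule continuous_on_compose2[OF delta_cont]) (use h in \<open>auto intro!: continuous_intros\<close>)
  then have c: "continuous_on (S \<times> cbox p q) (\<lambda>(s, x). \<delta> x s)"
    by (simp add: split_beta)
  show ?thesis using integral_continuous_on_param[of S p q "\<lambda>s x. \<delta> x s", OF c] by simp
qed

lemma Phi_cont: "x \<in> {a..b} \<Longrightarrow> continuous_on S (\<lambda>s. \<Phi> x s)"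
proof -
  assume x: "x \<in> {a..b}"
  have cp: "continuous_on S (\<lambda>s. fp x s)" by (rule cont_fix_x[OF subset_refl cont(1) x])
  have cm: "continuous_on S (\<lambda>s. fm x s)" by (rule cont_fix_x[OF subset_refl cont(4) x])
  have 1: "continuous_on S (\<lambda>s. \<psi> (x, fp x s, s))"
    by (rule continuous_on_compose2[OF psi_cont]) (use inUU in \<open>auto intro!: continuous_intros cp\<close>)
  have 2: "continuous_on S (\<lambda>s. \<psi> (x, fm x s, s))"
    by (rule continuous_on_compose2[OF psi_cont]) (use inUU in \<open>auto intro!: continuous_intros cm\<close>)
  show ?thesis unfolding \<Phi>_def by (intro continuous_on_diff 1 2)
qed

lemma prod_cont: "continuous_on ({a..b} \<times> S) (\<lambda>(x, s). Ubar s * \<delta> x s)"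
proof -
  have "continuous_on ({a..b} \<times> S) (\<lambda>z. Ubar (snd z))"
    by (rule continuous_on_compose2[OF Ubar_cont]) (auto intro!: continuous_intros)
  from continuous_on_mult[OF this delta_cont] show ?thesis by (simp add: split_beta)
qed

lemma gf_cont: "t \<in> S \<Longrightarrow> t1 \<in> S \<Longrightarrow> continuous_on {a..b} (\<lambda>x. integral {t..t1} (\<lambda>s. Ubar s * \<delta> x s))"
proof -
  assume t: "t \<in> S" "t1 \<in> S"
  have "cbox t t1 \<subseteq> S" using S_Icc[of t t1] t S_nonneg by auto
  then have "continuous_on ({a..b} \<times> cbox t t1) (\<lambda>(x, s). Ubar s * \<delta> x s)"
    by (intro continuous_on_subset[OF prod_cont]) auto
  from integral_continuous_on_param[of "{a..b}" t t1 "\<lambda>x s. Ubar s * \<delta> x s", OF this] show ?thesis by simp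
qed


lemma step:
  assumes p: "a \<le> p" and e: "0 < \<epsilon>" and pq: "p + \<epsilon> \<le> q - \<epsilon>" and q: "q \<le> b"
    and t: "t \<in> S" "t \<le> t1" "t1 \<in> S"
  shows "\<epsilon> * integral {p+\<epsilon>..q-\<epsilon>} (\<lambda>x. \<delta> x t) \<le> \<epsilon> * integral {a..b} (\<lambda>x. \<delta> x t1)
           + integral {t..t1} (\<lambda>s. Ubar s * integral {p..q} (\<lambda>x. \<delta> x s))"
proof -
  define gf where "gf x = integral {t..t1} (\<lambda>s. Ubar s * \<delta> x s)" for x
  define I' where "I' = integral {p+\<epsilon>..q-\<epsilon>} (\<lambda>x. \<delta> x t)"
  define E where "E = integral {a..b} (\<lambda>x. \<delta> x t1)"
  have tS: "{t..t1} \<subseteq> S" using S_Icc t S_nonneg by auto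
  have key: "I' \<le> E + gf \<alpha> + gf \<beta>" if \<alpha>: "p \<le> \<alpha>" "\<alpha> \<le> p+\<epsilon>" and \<beta>: "q-\<epsilon> \<le> \<beta>" "\<beta> \<le> q" for \<alpha> \<beta>
  proof -
    have ab': "a \<le> \<alpha>" "\<alpha> \<le> \<beta>" "\<beta> \<le> b" using \<alpha> \<beta> p q pq by auto
    have xa: "\<alpha> \<in> {a..b}" and xb: "\<beta> \<in> {a..b}" using ab' by auto
    have 1: "I' \<le> integral {\<alpha>..\<beta>} (\<lambda>x. \<delta> x t)" unfolding I'_def
      by (rule I_mono) (use ab' \<alpha> \<beta> t in auto)
    have 2: "integral {\<alpha>..\<beta>} (\<lambda>x. \<delta> x t1) \<le> E" unfolding E_def
      by (rule I_mono) (use ab' t in auto)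
    have 3: "integral {\<alpha>..\<beta>} (\<lambda>x. \<delta> x t1) - integral {\<alpha>..\<beta>} (\<lambda>x. \<delta> x t) = integral {t..t1} (\<lambda>s. \<Phi> \<beta> s - \<Phi> \<alpha> s)"
      by (rule ident) (use ab' t in auto)
    have iPa: "(\<lambda>s. \<Phi> \<alpha> s) integrable_on {t..t1}"
      by (intro integrable_continuous_interval continuous_on_subset[OF Phi_cont[OF xa] tS])
    have iPb: "(\<lambda>s. \<Phi> \<beta> s) integrable_on {t..t1}"
      by (intro integrable_continuous_interval continuous_on_subset[OF Phi_cont[OF xb] tS])
    have cg: "continuous_on S (\<lambda>s. Ubar s * \<delta> x s)" if "x \<in> {a..b}" for x
      by (intro continuous_on_mult Ubar_cont cont_fix_x[OF subset_refl delta_cont that])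
    have iga: "(\<lambda>s. Ubar s * \<delta> \<alpha> s) integrable_on {t..t1}"
      by (intro integrable_continuous_interval continuous_on_subset[OF cg[OF xa] tS])
    have igb: "(\<lambda>s. Ubar s * \<delta> \<beta> s) integrable_on {t..t1}"
      by (intro integrable_continuous_interval continuous_on_subset[OF cg[OF xb] tS])
    have 4: "integral {t..t1} (\<lambda>s. \<Phi> \<beta> s - \<Phi> \<alpha> s) = integral {t..t1} (\<lambda>s. \<Phi> \<beta> s) - integral {t..t1} (\<lambda>s. \<Phi> \<alpha> s)"
      by (rule integral_diff[OF iPb iPa])
    have 5: "integral {t..t1} (\<lambda>s. \<Phi> \<alpha> s) \<le> gf \<alpha>" unfolding gf_def
      by (rule integral_le[OF iPa iga]) (use Phi_bound[OF xa] tS in \<open>force simp: abs_le_iff\<close>)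
    have "integral {t..t1} (\<lambda>s. - \<Phi> \<beta> s) \<le> gf \<beta>" unfolding gf_def
      by (rule integral_le[OF integrable_neg[OF iPb] igb]) (use Phi_bound[OF xb] tS in \<open>force simp: abs_le_iff\<close>)
    then have 6: "- integral {t..t1} (\<lambda>s. \<Phi> \<beta> s) \<le> gf \<beta>" by simp
    show ?thesis using 1 2 3 4 5 6 by linarith
  qed
  have gint: "gf integrable_on {c..d}" if "a \<le> c" "d \<le> b" for c d
    unfolding gf_def[abs_def]
    by (intro integrable_continuous_interval continuous_on_subset[OF gf_cont[OF t(1) t(3)]]) (use that in auto)
  define Ip where "Ip = integral {p..p+\<epsilon>} gf"
  define Iq where "Iq = integral {q-\<epsilon>..q} gf"
  have avg1: "\<epsilon> * (I' - E - gf \<beta>) \<le> Ip" if \<beta>: "q-\<epsilon> \<le> \<beta>" "\<beta> \<le> q" for \<beta>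
  proof -
    have "integral {p..p+\<epsilon>} (\<lambda>_. I' - E - gf \<beta>) \<le> integral {p..p+\<epsilon>} gf"
    proof (rule integral_le)
      show "gf integrable_on {p..p+\<epsilon>}" using gint[of p "p+\<epsilon>"] p pq q e by auto
      fix x assume "x \<in> {p..p+\<epsilon>}"
      then show "I' - E - gf \<beta> \<le> gf x" using key[of x \<beta>] \<beta> by auto
    qed auto
    then show ?thesis using e by (simp add: Ip_def)
  qed
  have "integral {q-\<epsilon>..q} (\<lambda>_. \<epsilon> * (I' - E) - Ip) \<le> integral {q-\<epsilon>..q} (\<lambda>\<beta>. \<epsilon> * gf \<beta>)"
  proof (rule integral_le)
    show "(\<lambda>\<beta>. \<epsilon> * gf \<beta>) integrable_on {q - \<epsilon>..q}"
    proof -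
      have "gf integrable_on {q - \<epsilon>..q}" using gint[of "q-\<epsilon>" q] p pq q e by auto
      then show ?thesis using integrable_on_cmult_left[of gf "{q - \<epsilon>..q}" \<epsilon>] by simp
    qed
    fix \<beta> assume "\<beta> \<in> {q-\<epsilon>..q}"
    then show "\<epsilon> * (I' - E) - Ip \<le> \<epsilon> * gf \<beta>" using avg1[of \<beta>] by (auto simp: algebra_simps)
  qed auto
  then have "\<epsilon> * (\<epsilon> * (I' - E) - Ip) \<le> \<epsilon> * Iq" using e by (simp add: Iq_def int_mult_left)
  then have "\<epsilon> * (I' - E) - Ip \<le> Iq" using e by (simp only: mult_le_cancel_left_pos)
  then have avg: "\<epsilon> * (I' - E) \<le> Ip + Iq" by linarith
  have fub: "integral {c..d} gf = integral {t..t1} (\<lambda>s. Ubar s * integral {c..d} (\<lambda>x. \<delta> x s))"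
    if "a \<le> c" "d \<le> b" for c d
  proof -
    have "cbox (c, t) (d, t1) \<subseteq> {a..b} \<times> S" using that tS by (auto simp: cbox_Pair_eq)
    then have cc: "continuous_on (cbox (c, t) (d, t1)) (\<lambda>(x, s). Ubar s * \<delta> x s)"
      by (rule continuous_on_subset[OF prod_cont])
    from integral_swap_continuous[of c t d t1 "\<lambda>x s. Ubar s * \<delta> x s", OF cc]
    show ?thesis unfolding gf_def by (simp add: int_mult_left)
  qed
  have cJ: "continuous_on S (\<lambda>s. Ubar s * integral {c..d} (\<lambda>x. \<delta> x s))" if "a \<le> c" "d \<le> b" for c d
    by (intro continuous_on_mult Ubar_cont I_cont that)
  have iJ: "(\<lambda>s. Ubar s * integral {c..d} (\<lambda>x. \<delta> x s)) integrable_on {t..t1}" if "a \<le> c" "d \<le> b" for c d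
    by (intro integrable_continuous_interval continuous_on_subset[OF cJ[OF that] tS])
  have pe: "a \<le> p" "p + \<epsilon> \<le> b" "a \<le> q - \<epsilon>" "q \<le> b" using p pq q e by auto
  have "Ip + Iq = integral {t..t1} (\<lambda>s. Ubar s * integral {p..p+\<epsilon>} (\<lambda>x. \<delta> x s) + Ubar s * integral {q-\<epsilon>..q} (\<lambda>x. \<delta> x s))"
    unfolding Ip_def Iq_def fub[OF pe(1,2)] fub[OF pe(3,4)]
    by (rule integral_add[symmetric]) (intro iJ pe)+
  also have "\<dots> \<le> integral {t..t1} (\<lambda>s. Ubar s * integral {p..q} (\<lambda>x. \<delta> x s))"
  proof (rule integral_le)
    show "(\<lambda>s. Ubar s * integral {p..p+\<epsilon>} (\<lambda>x. \<delta> x s) + Ubar s * integral {q-\<epsilon>..q} (\<lambda>x. \<delta> x s)) integrable_on {t..t1}"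
      by (intro integrable_add iJ pe)
    show "(\<lambda>s. Ubar s * integral {p..q} (\<lambda>x. \<delta> x s)) integrable_on {t..t1}"
      by (intro iJ p q)
    fix s assume "s \<in> {t..t1}"
    then have s: "s \<in> S" using tS by auto
    have "integral {p..p+\<epsilon>} (\<lambda>x. \<delta> x s) + integral {q-\<epsilon>..q} (\<lambda>x. \<delta> x s) \<le> integral {p..q} (\<lambda>x. \<delta> x s)"
      by (rule I_split) (use p pq q e s in auto)
    then show "Ubar s * integral {p..p+\<epsilon>} (\<lambda>x. \<delta> x s) + Ubar s * integral {q-\<epsilon>..q} (\<lambda>x. \<delta> x s)
               \<le> Ubar s * integral {p..q} (\<lambda>x. \<delta> x s)"
      using Ubar_nonneg[OF s] by (simp add: distrib_left[symmetric] mult_left_mono)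
  qed
  finally show ?thesis using avg unfolding I'_def E_def by (simp add: algebra_simps)
qed


lemma alg1: "0 < \<epsilon> \<Longrightarrow> 0 < pp \<Longrightarrow> 0 < ff \<Longrightarrow> 0 < qq \<Longrightarrow>
  (\<epsilon> * E + W + (A / (pp * ff)) * (Z / qq)) / \<epsilon> = E + W / \<epsilon> + A * (Z / (\<epsilon> * pp)) / (qq * ff)"
  for \<epsilon> pp ff qq E W A Z :: real
  by (simp add: field_simps)

lemma Ubar_int': "t \<in> S \<Longrightarrow> t1 \<in> S \<Longrightarrow> Ubar integrable_on {t..t1}"
  using Ubar_int[of t1 t] S_nonneg[of t] by auto

lemma V_cont: "t \<in> S \<Longrightarrow> t1 \<in> S \<Longrightarrow> continuous_on {t..t1} (\<lambda>s. integral {s..t1} Ubar)"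
  by (intro indefinite_integral_continuous_1' Ubar_int')

lemma iter:
  assumes t01: "t0 \<in> S" "t1 \<in> S" "t0 \<le> t1" and eta: "integral {t0..t1} Ubar \<le> \<eta>"
    and e: "0 < \<epsilon>" and k: "2 * real k * \<epsilon> \<le> b - a"
  shows "m \<le> k \<Longrightarrow> t \<in> S \<Longrightarrow> t0 \<le> t \<Longrightarrow> t \<le> t1 \<Longrightarrow>
     integral {a + real m * \<epsilon> .. b - real m * \<epsilon>} (\<lambda>x. \<delta> x t)
     \<le> integral {a..b} (\<lambda>x. \<delta> x t1) * (\<Sum>j<m. (\<eta>/\<epsilon>)^j)
        + M * (b - a) * (integral {t..t1} Ubar / \<epsilon>)^m / fact m"
proof (induction m arbitrary: t)
  case 0
  have "integral {a..b} (\<lambda>x. \<delta> x t) \<le> integral {a..b} (\<lambda>_. M)"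
  proof (rule integral_le)
    show "(\<lambda>x. \<delta> x t) integrable_on {a..b}" using delta_int 0 by auto
    fix x assume "x \<in> {a..b}" then show "\<delta> x t \<le> M" using bnd[of x t] 0 by (auto simp: \<delta>_def)
  qed auto
  then show ?case using ab by (simp add: mult.commute)
next
  case (Suc m)
  define E where "E = integral {a..b} (\<lambda>x. \<delta> x t1)"
  define r where "r = \<eta> / \<epsilon>"
  define A where "A = M * (b - a)"
  define V where "V s = integral {s..t1} Ubar" for s
  define Sm where "Sm = (\<Sum>j<m. r^j)"
  have t: "t \<in> S" "t0 \<le> t" "t \<le> t1" using Suc by auto
  have tS: "{t..t1} \<subseteq> S" using S_Icc t t01 S_nonneg by auto
  have Vnn: "0 \<le> V s" if "s \<in> S" "s \<le> t1" for s
    unfolding V_def using that S_Icc[of s t1] t01 S_nonneg[of s] by (intro integral_nonneg Ubar_int' Ubar_nonneg) auto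
  have Vle: "V t \<le> \<eta>"
  proof -
    have "V t \<le> integral {t0..t1} Ubar" unfolding V_def
      by (rule integral_subset_le) (use t t01 S_Icc[of t0 t1] S_nonneg[of t0] in \<open>auto intro!: Ubar_int' Ubar_nonneg\<close>)
    then show ?thesis using eta by simp
  qed
  have eta0: "0 \<le> \<eta>" using Vle Vnn[of t] t by simp
  have E0: "0 \<le> E" unfolding E_def using t01 by (intro integral_nonneg delta_int delta_nonneg) auto
  have Sm0: "0 \<le> Sm" unfolding Sm_def r_def using eta0 e by (intro sum_nonneg) auto
  have m: "m \<le> k" using Suc by simp
  have rm: "0 \<le> real m * \<epsilon>" using e by simp
  have geo: "2 * real (Suc m) * \<epsilon> \<le> b - a" using k Suc(2) e
    by (smt (verit) mult_right_mono of_nat_le_iff)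
  have S1: "\<epsilon> * integral {a + real m * \<epsilon> + \<epsilon> .. b - real m * \<epsilon> - \<epsilon>} (\<lambda>x. \<delta> x t) \<le> \<epsilon> * E
      + integral {t..t1} (\<lambda>s. Ubar s * integral {a + real m * \<epsilon> .. b - real m * \<epsilon>} (\<lambda>x. \<delta> x s))"
    unfolding E_def by (rule step) (use rm geo e t t01 in \<open>auto simp: algebra_simps\<close>)
  have ieq: "{a + real (Suc m) * \<epsilon> .. b - real (Suc m) * \<epsilon>} = {a + real m * \<epsilon> + \<epsilon> .. b - real m * \<epsilon> - \<epsilon>}"
    by (simp add: algebra_simps)
  have cI: "continuous_on S (\<lambda>s. Ubar s * integral {a + real m * \<epsilon> .. b - real m * \<epsilon>} (\<lambda>x. \<delta> x s))"
    using rm geo by (intro continuous_on_mult Ubar_cont I_cont) auto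
  have cR: "continuous_on {t..t1} (\<lambda>s. Ubar s * (E * Sm + A * (V s / \<epsilon>)^m / fact m))"
    unfolding V_def
    by (intro continuous_on_mult continuous_on_subset[OF Ubar_cont tS] continuous_intros V_cont t(1) t01(2)) (use e in auto)
  have S2: "integral {t..t1} (\<lambda>s. Ubar s * integral {a + real m * \<epsilon> .. b - real m * \<epsilon>} (\<lambda>x. \<delta> x s))
         \<le> integral {t..t1} (\<lambda>s. Ubar s * (E * Sm + A * (V s / \<epsilon>)^m / fact m))"
  proof (rule integral_le)
    show "(\<lambda>s. Ubar s * integral {a + real m * \<epsilon> .. b - real m * \<epsilon>} (\<lambda>x. \<delta> x s)) integrable_on {t..t1}"
      by (intro integrable_continuous_interval continuous_on_subset[OF cI tS])
    show "(\<lambda>s. Ubar s * (E * Sm + A * (V s / \<epsilon>)^m / fact m)) integrable_on {t..t1}"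
      by (intro integrable_continuous_interval cR)
    fix s assume "s \<in> {t..t1}"
    then have s: "s \<in> S" "t0 \<le> s" "s \<le> t1" using tS t by auto
    have "integral {a + real m * \<epsilon> .. b - real m * \<epsilon>} (\<lambda>x. \<delta> x s) \<le> E * Sm + A * (V s / \<epsilon>)^m / fact m"
      using Suc.IH[OF m s] unfolding E_def Sm_def r_def A_def V_def by simp
    then show "Ubar s * integral {a + real m * \<epsilon> .. b - real m * \<epsilon>} (\<lambda>x. \<delta> x s) \<le> Ubar s * (E * Sm + A * (V s / \<epsilon>)^m / fact m)"
      using Ubar_nonneg[OF s(1)] by (rule mult_left_mono)
  qed
  have S3: "integral {t..t1} (\<lambda>s. Ubar s * (E * Sm + A * (V s / \<epsilon>)^m / fact m))
     = (E * Sm) * V t + (A / (\<epsilon>^m * fact m)) * (V t ^ Suc m / real (Suc m))"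
  proof -
    have "integral {t..t1} (\<lambda>s. Ubar s * (E * Sm + A * (V s / \<epsilon>)^m / fact m))
        = integral {t..t1} (\<lambda>s. (E * Sm) * Ubar s + (A / (\<epsilon>^m * fact m)) * (Ubar s * V s ^ m))"
      by (rule integral_cong) (simp add: field_simps power_divide)
    also have "\<dots> = integral {t..t1} (\<lambda>s. (E * Sm) * Ubar s) + integral {t..t1} (\<lambda>s. (A / (\<epsilon>^m * fact m)) * (Ubar s * V s ^ m))"
    proof (rule integral_add)
      show "(\<lambda>s. E * Sm * Ubar s) integrable_on {t..t1}"
        by (intro integrable_continuous_interval continuous_intros continuous_on_subset[OF Ubar_cont tS])
      show "(\<lambda>s. A / (\<epsilon> ^ m * fact m) * (Ubar s * V s ^ m)) integrable_on {t..t1}"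
        unfolding V_def
        by (intro integrable_continuous_interval continuous_intros continuous_on_subset[OF Ubar_cont tS] V_cont t(1) t01(2))
    qed
    also have "\<dots> = (E * Sm) * V t + (A / (\<epsilon>^m * fact m)) * (V t ^ Suc m / real (Suc m))"
      unfolding int_mult_left V_def
      using volterra[OF continuous_on_subset[OF Ubar_cont tS] t(3), of m] by simp
    finally show ?thesis .
  qed
  define X where "X = integral {a + real m * \<epsilon> + \<epsilon> .. b - real m * \<epsilon> - \<epsilon>} (\<lambda>x. \<delta> x t)"
  have "\<epsilon> * X \<le> \<epsilon> * E + (E * Sm) * V t + (A / (\<epsilon>^m * fact m)) * (V t ^ Suc m / real (Suc m))"
    using S1 S2 S3 unfolding X_def by linarith
  then have "X \<le> (\<epsilon> * E + (E * Sm) * V t + (A / (\<epsilon>^m * fact m)) * (V t ^ Suc m / real (Suc m))) / \<epsilon>"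
    using e by (simp add: pos_le_divide_eq mult.commute)
  also have "\<dots> = E + (E * Sm) * V t / \<epsilon> + A * (V t / \<epsilon>)^(Suc m) / fact (Suc m)"
  proof -
    have pe: "(V t / \<epsilon>)^(Suc m) = V t^(Suc m) / (\<epsilon> * \<epsilon>^m)" by (simp add: power_divide)
    have fe: "fact (Suc m) = real (Suc m) * (fact m :: real)" by (simp del: of_nat_Suc)
    show ?thesis unfolding pe fe
      by (rule alg1) (use e in auto)
  qed
  also have "(E * Sm) * V t / \<epsilon> \<le> (E * Sm) * r"
    unfolding r_def using Vle E0 Sm0 e by (simp add: divide_right_mono mult_left_mono)
  finally have X: "X \<le> E + (E * Sm) * r + A * (V t / \<epsilon>)^(Suc m) / fact (Suc m)" by simp
  have T3: "E * (\<Sum>j<Suc m. r^j) = E + E * Sm * r"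
  proof -
    have "(\<Sum>j<Suc m. r^j) = 1 + r * Sm"
      unfolding Sm_def by (simp only: sum.lessThan_Suc_shift power_0 power_Suc sum_distrib_left)
    then show ?thesis by (simp add: algebra_simps)
  qed
  have goal': "X \<le> E * (\<Sum>j<Suc m. r^j) + A * (V t / \<epsilon>)^(Suc m) / fact (Suc m)"
    using X T3 by linarith
  from goal' show ?case unfolding ieq X_def E_def A_def V_def r_def .
qed


lemma E_seq: "t0 \<in> S \<Longrightarrow> \<exists>sq::nat \<Rightarrow> real. (\<forall>n. sq n \<in> S \<and> t0 \<le> sq n) \<and> filterlim sq (before T) sequentially"
proof -
  assume t0: "t0 \<in> S"
  show ?thesis
  proof (cases T)
    case (real r)
    then have tr: "0 \<le> t0" "t0 < r" using t0 by (auto simp: time_int_def)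
    define sq where "sq n = r - (r - t0) / real (Suc n)" for n
    have ge: "t0 \<le> sq n" for n
    proof -
      have "(r - t0) / real (Suc n) \<le> r - t0" using tr by (simp add: divide_le_eq)
      then show ?thesis by (simp add: sq_def)
    qed
    have lt: "sq n < r" for n using tr by (simp add: sq_def)
    have inS: "sq n \<in> S" for n using ge[of n] lt[of n] tr real by (simp add: time_int_def)
    have "(\<lambda>n. (r - t0) / real (Suc n)) \<longlonglongrightarrow> 0"
      using LIMSEQ_Suc[OF lim_const_over_n[of "r - t0"]] by simp
    then have "sq \<longlonglongrightarrow> r - 0" unfolding sq_def[abs_def] by (intro tendsto_diff tendsto_const)
    then have "filterlim sq (at_left r) sequentially"
      by (intro tendsto_imp_filterlim_at_left) (auto simp: lt)
    then show ?thesis using inS ge real by (auto simp: before_def)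
  next
    case PInf
    define sq where "sq n = t0 + real n" for n
    have "filterlim sq at_top sequentially"
      unfolding sq_def[abs_def] by (rule filterlim_tendsto_add_at_top[OF tendsto_const filterlim_real_sequentially])
    moreover have "sq n \<in> S \<and> t0 \<le> sq n" for n using t0 PInf by (auto simp: sq_def time_int_def)
    ultimately show ?thesis using PInf by (auto simp: before_def)
  next
    case MInf
    with T_pos show ?thesis by simp
  qed
qed

lemma E_small: "t0 \<in> S \<Longrightarrow> 0 < \<zeta> \<Longrightarrow> \<exists>t1\<in>S. t0 \<le> t1 \<and> integral {a..b} (\<lambda>x. \<delta> x t1) < \<zeta>"
proof -
  assume t0: "t0 \<in> S" and z: "0 < \<zeta>"
  obtain sq where sq: "\<And>n. sq n \<in> S" "\<And>n. t0 \<le> sq n" and sl: "filterlim sq (before T) sequentially"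
    using E_seq[OF t0] by blast
  have "(\<lambda>k. integral {a..b} (\<lambda>x. \<delta> x (sq k))) \<longlonglongrightarrow> integral {a..b} (\<lambda>x. 0::real)"
  proof (rule dominated_convergence(2))
    show "(\<lambda>x. \<delta> x (sq k)) integrable_on {a..b}" for k by (intro delta_int sq) auto
    show "(\<lambda>x. M) integrable_on {a..b}" by (rule Henstock_Kurzweil_Integration.integrable_const_ivl)
    show "norm (\<delta> x (sq k)) \<le> M" if "x \<in> {a..b}" for k x using bnd[OF that sq(1)] by (simp add: \<delta>_def)
    show "(\<lambda>k. \<delta> x (sq k)) \<longlonglongrightarrow> 0" if "x \<in> {a..b}" for x
      using filterlim_compose[OF lim[OF that] sl] by (simp add: \<delta>_def)
  qed
  then have "(\<lambda>k. integral {a..b} (\<lambda>x. \<delta> x (sq k))) \<longlonglongrightarrow> 0" by simp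
  from order_tendstoD(2)[OF this z] obtain k where "integral {a..b} (\<lambda>x. \<delta> x (sq k)) < \<zeta>"
    by (auto simp: eventually_sequentially)
  then show ?thesis using sq by blast
qed

lemma contradiction: False
proof -
  define c where "c = (b - a) / 4"
  define \<eta> where "\<eta> = c / 6"
  have c0: "0 < c" using ab by (simp add: c_def)
  have eta0: "0 < \<eta>" using c0 by (simp add: \<eta>_def)
  obtain t0 where t0: "t0 \<in> S" and tl: "\<And>t1. t1 \<in> S \<Longrightarrow> t0 \<le> t1 \<Longrightarrow> integral {t0..t1} Ubar \<le> \<eta>"
    using tail[OF eta0] by blast
  define P where "P = integral {a + c..b - c} (\<lambda>x. \<delta> x t0)"
  have P0: "0 < P"
  proof -
    have acb: "a + c \<le> b - c" unfolding c_def using ab by (simp add: field_simps)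
    then have ne: "{a + c..b - c} \<noteq> {}" by simp
    have cc: "continuous_on {a + c..b - c} (\<lambda>x. \<delta> x t0)"
      by (rule cont_fix_t[OF _ delta_cont t0]) (use c0 in auto)
    obtain x0 where x0: "x0 \<in> {a + c..b - c}" "\<And>y. y \<in> {a + c..b - c} \<Longrightarrow> \<delta> x0 t0 \<le> \<delta> y t0"
      using continuous_attains_inf[OF compact_Icc ne cc] by blast
    have m0: "0 < \<delta> x0 t0" using x0(1) c0 by (intro delta_pos t0) auto
    have "integral {a + c..b - c} (\<lambda>_. \<delta> x0 t0) \<le> P"
      unfolding P_def
      by (rule integral_le) (use x0 c0 t0 in \<open>auto intro!: delta_int\<close>)
    moreover have "integral {a + c..b - c} (\<lambda>_. \<delta> x0 t0) = ((b - c) - (a + c)) * \<delta> x0 t0"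
      using acb by simp
    moreover have "0 < ((b - c) - (a + c)) * \<delta> x0 t0"
    proof -
      have "0 < (b - c) - (a + c)" unfolding c_def using ab by (simp add: field_simps)
      then show ?thesis using m0 by simp
    qed
    ultimately show ?thesis by linarith
  qed
  define A where "A = M * (b - a)"
  have M0: "0 \<le> M" using bnd[of a 0] S_0 ab by (auto intro: order_trans[OF abs_ge_zero])
  have A0: "0 \<le> A" using M0 ab by (simp add: A_def)
  obtain n where n: "(1/2::real)^n < P / (2 * (A + 1))"
    using real_arch_pow_inv[of "P / (2 * (A + 1))" "1/2"] P0 A0 by auto
  define k where "k = Suc n"
  define \<epsilon> where "\<epsilon> = c / real k"
  have e0: "0 < \<epsilon>" using c0 by (simp add: \<epsilon>_def k_def)
  have kc: "real k * \<epsilon> = c" by (simp add: \<epsilon>_def k_def)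
  have kab: "2 * real k * \<epsilon> \<le> b - a" using kc c0 by (simp add: c_def)
  define Ck where "Ck = (\<Sum>j<k. (\<eta>/\<epsilon>)^j)"
  have Ck0: "0 \<le> Ck" unfolding Ck_def using eta0 e0 by (intro sum_nonneg) auto
  obtain t1 where t1: "t1 \<in> S" "t0 \<le> t1" and Et1: "integral {a..b} (\<lambda>x. \<delta> x t1) < P / (2 * (Ck + 1))"
    using E_small[OF t0, of "P / (2 * (Ck + 1))"] P0 Ck0 by auto
  define E where "E = integral {a..b} (\<lambda>x. \<delta> x t1)"
  have E0: "0 \<le> E" unfolding E_def using t1 by (intro integral_nonneg delta_int delta_nonneg) auto
  define V where "V = integral {t0..t1} Ubar"
  have V0: "0 \<le> V" unfolding V_def using t0 t1 S_Icc[of t0 t1] S_nonneg[of t0]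
    by (intro integral_nonneg Ubar_int' Ubar_nonneg) auto
  have Vle: "V \<le> \<eta>" unfolding V_def using tl[OF t1] .
  have main: "P \<le> E * Ck + A * (V / \<epsilon>)^k / fact k"
    using iter[OF t0 t1(1) t1(2) tl[OF t1] e0 kab, of k t0] t0 t1(2) kc
    unfolding P_def E_def Ck_def A_def V_def by simp
  have b1: "E * Ck < P / 2"
  proof -
    have "E * Ck \<le> P / (2 * (Ck + 1)) * Ck" using Et1 Ck0 unfolding E_def by (intro mult_right_mono) auto
    also have "\<dots> < P / 2" using P0 Ck0 by (simp add: field_simps)
    finally show ?thesis .
  qed
  have b2: "(V / \<epsilon>)^k / fact k \<le> (1/2)^k"
  proof -
    have "(V / \<epsilon>)^k / fact k \<le> (\<eta> / \<epsilon>)^k / fact k"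
      using V0 Vle e0 by (intro divide_right_mono power_mono) auto
    also have "\<eta> / \<epsilon> = real k / 6" using c0 by (simp add: \<eta>_def \<epsilon>_def k_def)
    also have "(real k / 6)^k / fact k = (real k ^ k / fact k) * (1/6)^k"
      by (simp add: power_divide)
    also have "\<dots> \<le> exp (real k) * (1/6)^k"
      by (intro mult_right_mono exp_term) auto
    also have "exp (real k) = exp 1 ^ k" using exp_of_nat_mult[of k "1::real"] by simp
    also have "exp 1 ^ k * (1/6::real)^k \<le> 3 ^ k * (1/6)^k"
      by (intro mult_right_mono power_mono exp_le) auto
    also have "(3::real) ^ k * (1/6)^k = (1/2)^k" by (simp add: power_mult_distrib[symmetric])
    finally show ?thesis .
  qed
  have b3: "A * (V / \<epsilon>)^k / fact k < P / 2"
  proof -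
    have "A * (V / \<epsilon>)^k / fact k = A * ((V / \<epsilon>)^k / fact k)" by simp
    also have "\<dots> \<le> A * (1/2)^k" using b2 A0 by (rule mult_left_mono)
    also have "\<dots> \<le> (A + 1) * (1/2)^n"
      by (intro mult_mono power_decreasing) (auto simp: k_def A0)
    also have "\<dots> < (A + 1) * (P / (2 * (A + 1)))" using n A0 by (intro mult_strict_left_mono) auto
    also have "\<dots> = P / 2" using A0 by (simp add: field_simps)
    finally show ?thesis .
  qed
  show False using main b1 b3 by linarith
qed

end



theorem theorem1:
  fixes T :: ereal and \<psi> :: "real \<times> real \<times> real \<Rightarrow> real" and a b :: real
    and fp fm fpx fpt fmx fmt :: "real \<Rightarrow> real \<Rightarrow> real"
  assumes T_pos: "0 < T"
    and smooth: "smooth_on {(x1, x2, t). t \<in> time_int T} \<psi>"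
    and ab: "a < b"
    and fp_dx: "\<And>x t. x \<in> {a..b} \<Longrightarrow> t \<in> time_int T \<Longrightarrow>
                  ((\<lambda>y. fp y t) has_real_derivative fpx x t) (at x within {a..b})"
    and fp_dt: "\<And>x t. x \<in> {a..b} \<Longrightarrow> t \<in> time_int T \<Longrightarrow>
                  ((\<lambda>s. fp x s) has_real_derivative fpt x t) (at t within time_int T)"
    and fm_dx: "\<And>x t. x \<in> {a..b} \<Longrightarrow> t \<in> time_int T \<Longrightarrow>
                  ((\<lambda>y. fm y t) has_real_derivative fmx x t) (at x within {a..b})"
    and fm_dt: "\<And>x t. x \<in> {a..b} \<Longrightarrow> t \<in> time_int T \<Longrightarrow>
                  ((\<lambda>s. fm x s) has_real_derivative fmt x t) (at t within time_int T)"
    and cont: "continuous_on ({a..b} \<times> time_int T) (\<lambda>(x, t). fp x t)"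
              "continuous_on ({a..b} \<times> time_int T) (\<lambda>(x, t). fpx x t)"
              "continuous_on ({a..b} \<times> time_int T) (\<lambda>(x, t). fpt x t)"
              "continuous_on ({a..b} \<times> time_int T) (\<lambda>(x, t). fm x t)"
              "continuous_on ({a..b} \<times> time_int T) (\<lambda>(x, t). fmx x t)"
              "continuous_on ({a..b} \<times> time_int T) (\<lambda>(x, t). fmt x t)"
    and order: "\<And>x t. x \<in> {a..b} \<Longrightarrow> t \<in> time_int T \<Longrightarrow> fm x t < fp x t"
    and kin_p: "\<And>x t. x \<in> {a..b} \<Longrightarrow> t \<in> time_int T \<Longrightarrow>
                  vel2 \<psi> x (fp x t) t = fpx x t * vel1 \<psi> x (fp x t) t + fpt x t"
    and kin_m: "\<And>x t. x \<in> {a..b} \<Longrightarrow> t \<in> time_int T \<Longrightarrow>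
                  vel2 \<psi> x (fm x t) t = fmx x t * vel1 \<psi> x (fm x t) t + fmt x t"
    and growth: "(\<integral>\<^sup>+ t \<in> time_int T.
                    (SUP p \<in> {(x1, x2). x1 \<in> {a..b} \<and> fm x1 t \<le> x2 \<and> x2 \<le> fp x1 t}.
                       ennreal (sqrt ((vel1 \<psi> (fst p) (snd p) t)\<^sup>2 + (vel2 \<psi> (fst p) (snd p) t)\<^sup>2)))
                  \<partial>lborel) < \<infinity>"
  shows "\<not> ((\<exists>M. \<forall>x\<in>{a..b}. \<forall>t\<in>time_int T. \<bar>fp x t - fm x t\<bar> \<le> M) \<and>
            (\<forall>x\<in>{a..b}. ((\<lambda>t. fp x t - fm x t) \<longlongrightarrow> 0) (before T)))"
  proof
  assume H: "(\<exists>M. \<forall>x\<in>{a..b}. \<forall>t\<in>time_int T. \<bar>fp x t - fm x t\<bar> \<le> M) \<and>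
            (\<forall>x\<in>{a..b}. ((\<lambda>t. fp x t - fm x t) \<longlongrightarrow> 0) (before T))"
  then obtain M where M: "\<And>x t. x \<in> {a..b} \<Longrightarrow> t \<in> time_int T \<Longrightarrow> \<bar>fp x t - fm x t\<bar> \<le> M" by blast
  from H have L: "\<And>x. x \<in> {a..b} \<Longrightarrow> ((\<lambda>t. fp x t - fm x t) \<longlongrightarrow> 0) (before T)" by blast
  interpret front T \<psi> a b fp fm fpx fpt fmx fmt M
    by (rule front.intro) (fact assms M L)+
  show False by (rule contradiction)
qed

end
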